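(* Let $n\geq 4$ and $m=\lfloor (n-2)/2\rfloor$. Let $G_m$ be the group generated by the maps in $\mathcal C_n$, acting on the set of all permutations of length $n$. Then every orbit of this action has size $2^m$, and for any orbit $A$, \[\sum_{p\in A} z^{\mathrm{run}(p)} = z^a(1+z)^m\] for some nonnegative integer $a$.
   Context: For a permutation $p=p_1p_2\cdots p_n$ and an index $i\in[2,n-1]$, $p$ changes direction at $i$ if $p_{i-1}<p_i>p_{i+1}$ or $p_{i-1}>p_i<p_{i+1}$; $\mathrm{run}(p)=k$ means $p$ changes direction exactly $k-1$ times (the number of alternating runs). For a string $s$ of distinct integers with underlying set $S$, its complement relative to $S$ is obtained by replacing, for each $j$, the $j$th smallest element of $S$ by the $j$th largest element of $S$. For $1\leq i\leq n$, $c_i$ is the map on permutations of length $n$ that leaves $p_1\cdots p_{i-1}$ unchanged and replaces $p_ip_{i+1}\cdots p_n$ by its complement relative to $\{p_i,\dots,p_n\}$. If $n$ is even, $\mathcal C_n=\{c_3,c_5,c_7,\dots,c_{n-1}\}$; if $n$ is odd, $\mathcal C_n=\{c_3,c_5,c_7,\dots,c_{n-2}\}$. In both cases $\mathcal C_n$ has $m=\lfloor (n-2)/2\rfloor$ elements, each an involution, pairwise commuting, so they generate a group $G_m\cong(\mathbb Z_2)^m$ acting on permutations of length $n$. *)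

theory Defs
  imports "HOL-Combinatorics.Multiset_Permutations" "HOL-Computational_Algebra.Polynomial"
begin

text \<open>Permutations of length n are lists in permutations_of_set {1..n}.
  Positions are 0-indexed in the list; index i (paper, 1-indexed, 2 \<le> i \<le> n-1)
  corresponds to list position i-1.\<close>

definition changes_dir_at :: "nat list \<Rightarrow> nat \<Rightarrow> bool" where
  "changes_dir_at p j \<longleftrightarrow> 1 \<le> j \<and> j + 1 < length p \<and>
     ((p ! (j-1) < p ! j \<and> p ! j > p ! (j+1)) \<or> (p ! (j-1) > p ! j \<and> p ! j < p ! (j+1)))"

definition run :: "nat list \<Rightarrow> nat" where
  "run p = card {j. changes_dir_at p j} + 1"

text \<open>Complement of a string of distinct integers relative to its underlying set S:
  the element of rank r (0-based, from the bottom) is replaced by the element of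
  rank r from the top.\<close>
definition complement :: "nat list \<Rightarrow> nat list" where
  "complement s = map (\<lambda>x. rev (sorted_list_of_set (set s)) ! card {y \<in> set s. y < x}) s"

definition cmap :: "nat \<Rightarrow> nat list \<Rightarrow> nat list" where
  "cmap i p = take (i - 1) p @ complement (drop (i - 1) p)"

definition Cn :: "nat \<Rightarrow> nat set" where
  "Cn n = (if even n then {i. odd i \<and> 3 \<le> i \<and> i \<le> n - 1}
                     else {i. odd i \<and> 3 \<le> i \<and> i \<le> n - 2})"

text \<open>Orbit of p under the group generated by the involutions c_i, i \<in> Cn n
  (as the generators are involutions, the generated group equals the generated monoid).\<close>
definition orbit :: "nat \<Rightarrow> nat list \<Rightarrow> nat list set" where
  "orbit n p = {q. (p, q) \<in> {(x, cmap i x) | x i. i \<in> Cn n}\<^sup>*}"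

end

theory Submission
  imports Defs
begin


definition rk :: "nat set \<Rightarrow> nat \<Rightarrow> nat" where
  "rk V x = card {y \<in> V. y < x}"

definition phi :: "nat set \<Rightarrow> nat \<Rightarrow> nat" where
  "phi V x = rev (sorted_list_of_set V) ! rk V x"

lemma complement_phi: "complement s = map (phi (set s)) s"
  by (simp add: complement_def phi_def rk_def)

lemma rk_less_card: assumes "finite V" "x \<in> V" shows "rk V x < card V"
proof -
  have "{y \<in> V. y < x} \<subset> V" using assms by auto
  then show ?thesis unfolding rk_def using assms(1) by (simp add: psubset_card_mono)
qed

lemma rk_strict: assumes "finite V" "x \<in> V" "y \<in> V" "x < y" shows "rk V x < rk V y"
proof -
  have "{z \<in> V. z < x} \<subset> {z \<in> V. z < y}" using assms by auto
  then show ?thesis unfolding rk_def using assms(1) by (simp add: psubset_card_mono)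
qed

lemma phi_alt: assumes "finite V" "x \<in> V"
  shows "phi V x = sorted_list_of_set V ! (card V - 1 - rk V x)"
  using rk_less_card[OF assms] assms
  by (simp add: phi_def rev_nth)

lemma phi_in: assumes "finite V" "x \<in> V" shows "phi V x \<in> V"
proof -
  have "card V - 1 - rk V x < length (sorted_list_of_set V)"
    using rk_less_card[OF assms] by simp
  then show ?thesis using phi_alt[OF assms] assms(1)
    by (metis nth_mem set_sorted_list_of_set)
qed

lemma phi_anti: assumes "finite V" "x \<in> V" "y \<in> V" "x < y" shows "phi V y < phi V x"
proof -
  have a: "rk V x < rk V y" by (rule rk_strict[OF assms])
  have b: "rk V y < card V" by (rule rk_less_card[OF assms(1,3)])
  have "card V - 1 - rk V y < card V - 1 - rk V x" using a b by linarith
  moreover have "card V - 1 - rk V x < length (sorted_list_of_set V)" using a b by simp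
  ultimately show ?thesis using phi_alt[OF assms(1,2)] phi_alt[OF assms(1,3)]
    using sorted_wrt_nth_less[OF strict_sorted_list_of_set] by metis
qed

lemma phi_less_iff: assumes "finite V" "x \<in> V" "y \<in> V"
  shows "(phi V x < phi V y) = (y < x)"
  using phi_anti[OF assms(1)] assms by (metis less_asym' linorder_neqE_nat)

lemma phi_inj: "finite V \<Longrightarrow> inj_on (phi V) V"
  unfolding inj_on_def by (metis linorder_neqE_nat phi_anti less_irrefl)

lemma phi_image: assumes "finite V" shows "phi V ` V = V"
proof -
  have "phi V ` V \<subseteq> V" using phi_in[OF assms] by auto
  moreover have "card (phi V ` V) = card V" using card_image[OF phi_inj[OF assms]] .
  ultimately show ?thesis using assms by (simp add: card_subset_eq)
qed

lemma mono_rk: assumes "finite V" "f ` V = T" "\<And>x y. x \<in> V \<Longrightarrow> y \<in> V \<Longrightarrow> x < y \<Longrightarrow> f x < f y"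
  "x \<in> V" shows "rk T (f x) = rk V x"
proof -
  have inj: "inj_on f V" unfolding inj_on_def using assms(3) by (metis linorder_neqE_nat less_irrefl)
  have "{z \<in> T. z < f x} = f ` {y \<in> V. y < x}"
  proof
    show "f ` {y \<in> V. y < x} \<subseteq> {z \<in> T. z < f x}" using assms by auto
    show "{z \<in> T. z < f x} \<subseteq> f ` {y \<in> V. y < x}"
    proof
      fix z assume "z \<in> {z \<in> T. z < f x}"
      then obtain y where y: "y \<in> V" "z = f y" "f y < f x" using assms(2) by auto
      have "y < x" using y assms(3)[of x y] assms(4) by (metis linorder_neqE_nat less_asym)
      then show "z \<in> f ` {y \<in> V. y < x}" using y by auto
    qed
  qed
  moreover have "card (f ` {y \<in> V. y < x}) = card {y \<in> V. y < x}"
    by (rule card_image) (rule inj_on_subset[OF inj], auto)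
  ultimately show ?thesis unfolding rk_def by simp
qed

lemma rk_inj: assumes "finite T" "a \<in> T" "b \<in> T" "rk T a = rk T b" shows "a = b"
  using rk_strict[OF assms(1)] assms by (metis linorder_neqE_nat less_irrefl)

lemma mono_unique: fixes f g :: "nat \<Rightarrow> nat" assumes "finite V" "f ` V = T" "g ` V = T"
  "\<And>x y. x \<in> V \<Longrightarrow> y \<in> V \<Longrightarrow> x < y \<Longrightarrow> f x < f y"
  "\<And>x y. x \<in> V \<Longrightarrow> y \<in> V \<Longrightarrow> x < y \<Longrightarrow> g x < g y"
  "x \<in> V" shows "f x = g x"
proof -
  have "finite T" using assms(1,2) by auto
  moreover have "rk T (f x) = rk T (g x)"
    using mono_rk[of V f T, OF assms(1,2,4,6)] mono_rk[of V g T, OF assms(1,3,5,6)] by simp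
  ultimately show ?thesis using rk_inj assms by blast
qed

lemma phi_phi: assumes "finite V" "x \<in> V" shows "phi V (phi V x) = x"
proof -
  have "(phi V \<circ> phi V) x = id x"
  proof (rule mono_unique[of V "phi V \<circ> phi V" V id])
    show "(phi V \<circ> phi V) ` V = V" using phi_image[OF assms(1)] by (metis image_comp)
  qed (use assms phi_anti phi_in in auto)
  then show ?thesis by simp
qed

lemma phi_comm: assumes "finite V" "K \<subseteq> V" "x \<in> K"
  shows "phi (phi V ` K) (phi V x) = phi V (phi K x)"
proof -
  define T where "T = phi V ` K"
  have fK: "finite K" using assms finite_subset by blast
  have fT: "finite T" using fK T_def by auto
  have "(phi T \<circ> phi V) x = (phi V \<circ> phi K) x"
  proof (rule mono_unique[of K "phi T \<circ> phi V" T "phi V \<circ> phi K"])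
    show "(phi T \<circ> phi V) ` K = T" using phi_image[OF fT] by (metis image_comp T_def)
    show "(phi V \<circ> phi K) ` K = T" using phi_image[OF fK] by (metis image_comp T_def)
    fix a b assume ab: "a \<in> K" "b \<in> K" "a < b"
    then have "a \<in> V" "b \<in> V" using assms by auto
    then show "(phi T \<circ> phi V) a < (phi T \<circ> phi V) b"
      using phi_anti[OF assms(1)] ab phi_anti[OF fT] T_def by auto
    show "(phi V \<circ> phi K) a < (phi V \<circ> phi K) b"
    proof -
      have "phi K b < phi K a" using phi_anti[OF fK] ab by auto
      moreover have "phi K a \<in> V" "phi K b \<in> V" using phi_in[OF fK] ab assms(2) by auto
      ultimately show ?thesis using phi_anti[OF assms(1)] by simp
    qed
  qed (use fK assms in auto)
  then show ?thesis by (simp add: T_def)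
qed



lemma set_complement: "set (complement s) = set s"
  by (simp add: complement_phi phi_image)

lemma length_complement: "length (complement s) = length s"
  by (simp add: complement_phi)

lemma complement_complement: "complement (complement s) = s"
proof -
  have "map (phi (set s)) (map (phi (set s)) s) = s"
    by (rule nth_equalityI) (simp_all add: phi_phi)
  then show ?thesis by (simp add: complement_phi[of "complement s"] set_complement) (simp add: complement_phi)
qed

lemma distinct_complement: "distinct s \<Longrightarrow> distinct (complement s)"
  by (simp add: complement_phi distinct_map phi_inj)

lemma length_cmap[simp]: "length (cmap i p) = length p"
  by (simp add: cmap_def length_complement)

lemma set_cmap: "set (cmap i p) = set p"
proof -
  have "set (cmap i p) = set (take (i-1) p) \<union> set (drop (i-1) p)"
    by (simp add: cmap_def set_complement)
  also have "\<dots> = set p" by (metis set_append append_take_drop_id)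
  finally show ?thesis .
qed

lemma distinct_cmap: "distinct p \<Longrightarrow> distinct (cmap i p)"
proof -
  assume d: "distinct p"
  have "set (take (i-1) p) \<inter> set (drop (i-1) p) = {}" using d by (metis append_take_drop_id distinct_append)
  then show ?thesis unfolding cmap_def using distinct_complement d
    by (simp add: set_complement)
qed

lemma perm_cmap: "q \<in> permutations_of_set A \<Longrightarrow> cmap i q \<in> permutations_of_set A"
  by (simp add: permutations_of_set_def set_cmap distinct_cmap)


lemma set_drop_nth: "set (drop a q) = {q ! t | t. a \<le> t \<and> t < length q}"
proof -
  have "set (drop a q) = {drop a q ! j | j. j < length (drop a q)}" by (auto simp: in_set_conv_nth)
  also have "\<dots> = {q ! t | t. a \<le> t \<and> t < length q}"
  proof (safe)
    fix j assume "j < length (drop a q)" then show "\<exists>t. drop a q ! j = q ! t \<and> a \<le> t \<and> t < length q"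
      by (intro exI[of _ "a + j"]) auto
  next
    fix t assume "a \<le> t" "t < length q" then show "\<exists>j. q ! t = drop a q ! j \<and> j < length (drop a q)"
      by (intro exI[of _ "t - a"]) auto
  qed
  finally show ?thesis .
qed

lemma nth_in_drop: "a \<le> t \<Longrightarrow> t < length q \<Longrightarrow> q ! t \<in> set (drop a q)"
  by (auto simp: set_drop_nth)

lemma cmap_nth: assumes "t < length q"
  shows "cmap i q ! t = (if t < i - 1 then q ! t else phi (set (drop (i-1) q)) (q ! t))"
proof (cases "t < i - 1")
  case True
  then show ?thesis using assms by (simp add: cmap_def nth_append)
next
  case False
  then show ?thesis using assms
    by (simp add: cmap_def nth_append complement_phi min_def)
qed


lemma cmap_cmap: "cmap i (cmap i p) = p"
proof (rule nth_equalityI)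
  show "length (cmap i (cmap i p)) = length p" by simp
  fix t assume t: "t < length (cmap i (cmap i p))"
  have V: "set (drop (i-1) (cmap i p)) = set (drop (i-1) p)"
  proof (cases "i - 1 \<le> length p")
    case True then show ?thesis by (simp add: cmap_def set_complement min_def)
  next
    case False then show ?thesis by (simp add: cmap_def complement_def)
  qed
  show "cmap i (cmap i p) ! t = p ! t"
    using t V by (auto simp: cmap_nth phi_phi nth_in_drop)
qed

lemma drop_cmap1: assumes "a < k - 1" shows "drop a (cmap k p) = cmap (k - a) (drop a p)"
proof (cases "k - 1 \<le> length p")
  case True
  then show ?thesis using assms by (simp add: cmap_def take_drop drop_append min_def)
next
  case False
  then show ?thesis using assms by (simp add: cmap_def take_drop drop_append min_def complement_def)
qed

lemma drop_cmap2: assumes "i - 1 \<le> a" shows "drop a (cmap i p) = map (phi (set (drop (i-1) p))) (drop a p)"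
proof (cases "i - 1 \<le> length p")
  case True
  then show ?thesis using assms by (simp add: cmap_def drop_append min_def complement_phi drop_map)
next
  case False
  then show ?thesis using assms by (simp add: cmap_def drop_append min_def complement_def)
qed

lemma cmap_comm_lt: assumes "i - 1 < k - 1"
  shows "cmap i (cmap k p) = cmap k (cmap i p)"
proof (rule nth_equalityI)
  show "length (cmap i (cmap k p)) = length (cmap k (cmap i p))" by simp
  define Vi where "Vi = set (drop (i-1) p)"
  define Vk where "Vk = set (drop (k-1) p)"
  have sub: "Vk \<subseteq> Vi" unfolding Vi_def Vk_def set_drop_nth using assms by auto
  have V1: "set (drop (i-1) (cmap k p)) = Vi"
    using drop_cmap1[of "i-1" k p] assms by (simp add: set_cmap Vi_def)
  have V2: "set (drop (k-1) (cmap i p)) = phi Vi ` Vk"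
    using drop_cmap2[of i "k-1" p] assms by (simp add: Vi_def Vk_def)
  fix t assume t: "t < length (cmap i (cmap k p))"
  then have t': "t < length p" by simp
  show "cmap i (cmap k p) ! t = cmap k (cmap i p) ! t"
  proof (cases "t < k - 1")
    case True
    then show ?thesis using t' V1 by (simp add: cmap_nth Vi_def)
  next
    case False
    then have "p ! t \<in> Vk" using t' nth_in_drop[of "k-1" t p] unfolding Vk_def by simp
    then show ?thesis using t' False assms phi_comm[of Vi Vk "p ! t"] sub V1 V2
      by (simp add: cmap_nth Vi_def Vk_def)
  qed
qed

lemma cmap_comm: "cmap i (cmap k p) = cmap k (cmap i p)"
proof -
  consider "i - 1 < k - 1" | "k - 1 < i - 1" | "i - 1 = k - 1" by linarith
  then show ?thesis
  proof cases
    case 3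
    then have "cmap i = cmap k" by (simp add: cmap_def fun_eq_iff)
    then show ?thesis by simp
  next
    case 1 then show ?thesis by (rule cmap_comm_lt)
  next
    case 2 then show ?thesis by (rule cmap_comm_lt[symmetric])
  qed
qed

interpretation cm: comp_fun_commute cmap
  by unfold_locales (simp add: fun_eq_iff cmap_comm)



lemma ch_inv: assumes "j + 2 < i \<or> i \<le> j"
  shows "changes_dir_at (cmap i q) j = changes_dir_at q j"
proof (cases "1 \<le> j \<and> j + 1 < length q")
  case False
  then show ?thesis by (auto simp: changes_dir_at_def)
next
  case True
  show ?thesis
  proof (cases "j + 2 < i")
    case True
    have e: "cmap i q ! (j-1) = q ! (j-1)" "cmap i q ! j = q ! j" "cmap i q ! (j+1) = q ! (j+1)"
      using True \<open>1 \<le> j \<and> j + 1 < length q\<close> by (auto simp: cmap_nth)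
    show ?thesis unfolding changes_dir_at_def length_cmap e ..
  next
    case False
    then have ij: "i \<le> j" using assms by simp
    define V where "V = set (drop (i-1) q)"
    have fV: "finite V" by (simp add: V_def)
    have m: "q ! (j-1) \<in> V" "q ! j \<in> V" "q ! (j+1) \<in> V"
      using True ij nth_in_drop[of "i-1" _ q] unfolding V_def by auto
    have e: "cmap i q ! (j-1) = phi V (q ! (j-1))" "cmap i q ! j = phi V (q ! j)"
        "cmap i q ! (j+1) = phi V (q ! (j+1))"
      using True ij by (auto simp: cmap_nth V_def)
    show ?thesis unfolding changes_dir_at_def length_cmap e
      using phi_less_iff[OF fV] m by auto
  qed
qed

lemma order_flip:
  fixes A B C D C' D' :: nat
  assumes "A \<noteq> B" "B \<noteq> C" "C \<noteq> D" "B \<noteq> C'" "C' \<noteq> D'" "(C' < D') = (D < C)"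
  shows "(((A<B \<and> B>C') \<or> (A>B \<and> B<C')) \<noteq> ((A<B \<and> B>C) \<or> (A>B \<and> B<C))) \<noteq>
         (((B<C' \<and> C'>D') \<or> (B>C' \<and> C'<D')) \<noteq> ((B<C \<and> C>D) \<or> (B>C \<and> C<D)))"
  using assms by (cases "A<B"; cases "B<C"; cases "B<C'"; cases "C<D") auto

lemma ch_flip: assumes "distinct q" "3 \<le> i" "i < length q"
  shows "(changes_dir_at (cmap i q) (i-2) \<noteq> changes_dir_at q (i-2)) \<noteq>
         (changes_dir_at (cmap i q) (i-1) \<noteq> changes_dir_at q (i-1))"
proof -
  obtain s where s: "i = s + 3" using assms(2) by (metis add.commute le_iff_add)
  define V where "V = set (drop (i-1) q)"
  have fV: "finite V" by (simp add: V_def)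
  have m: "q ! (s+2) \<in> V" "q ! (s+3) \<in> V"
    using assms s nth_in_drop[of "i-1" _ q] unfolding V_def by auto
  have nB: "q ! (s+1) \<notin> V"
  proof
    assume "q ! (s+1) \<in> V"
    then obtain t where t: "i - 1 \<le> t" "t < length q" "q ! (s+1) = q ! t"
      unfolding V_def set_drop_nth by auto
    then have "s + 1 = t" using assms(1,3) s by (simp add: nth_eq_iff_index_eq)
    then show False using t s by simp
  qed
  have d: "q ! s \<noteq> q ! (s+1)" "q ! (s+1) \<noteq> q ! (s+2)" "q ! (s+2) \<noteq> q ! (s+3)"
    using assms s by (auto simp: nth_eq_iff_index_eq)
  have e: "cmap i q ! s = q ! s" "cmap i q ! (s+1) = q ! (s+1)"
    "cmap i q ! (s+2) = phi V (q ! (s+2))" "cmap i q ! (s+3) = phi V (q ! (s+3))"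
    using assms s by (auto simp: cmap_nth V_def)
  have pin: "phi V (q ! (s+2)) \<in> V" using phi_in[OF fV m(1)] .
  have ne: "q ! (s+1) \<noteq> phi V (q ! (s+2))" using pin nB by metis
  have lt: "(phi V (q ! (s+2)) < phi V (q ! (s+3))) = (q ! (s+3) < q ! (s+2))"
    using phi_less_iff[OF fV m] .
  have i2: "i - 2 = s + 1" "i - 1 = s + 2" "s + 1 - 1 = s" "s + 2 - 1 = s + 1" using s by auto
  have i3: "s + 1 + 1 = s + 2" "s + 2 + 1 = s + 3" by simp_all
  have c: "1 \<le> s + 1" "s + 2 < length q" "1 \<le> s + 2" "s + 3 < length q" using assms(3) s by auto
  have ne2: "phi V (q ! (s+2)) \<noteq> phi V (q ! (s+3))"
    using inj_onD[OF phi_inj[OF fV] _ m] d(3) by metis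
  have of: "(((q!s<q!(s+1) \<and> q!(s+1)>phi V (q ! (s+2))) \<or> (q!s>q!(s+1) \<and> q!(s+1)<phi V (q ! (s+2)))) \<noteq>
      ((q!s<q!(s+1) \<and> q!(s+1)>q!(s+2)) \<or> (q!s>q!(s+1) \<and> q!(s+1)<q!(s+2)))) \<noteq>
     (((q!(s+1)<phi V (q ! (s+2)) \<and> phi V (q ! (s+2))>phi V (q ! (s+3))) \<or> (q!(s+1)>phi V (q ! (s+2)) \<and> phi V (q ! (s+2))<phi V (q ! (s+3)))) \<noteq>
      ((q!(s+1)<q!(s+2) \<and> q!(s+2)>q!(s+3)) \<or> (q!(s+1)>q!(s+2) \<and> q!(s+2)<q!(s+3))))"
    by (rule order_flip) (use d ne ne2 lt in auto)
  show ?thesis unfolding changes_dir_at_def length_cmap i2 i3 e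
    using c of by (simp only: c simp_thms)
qed



abbreviation ch where "ch \<equiv> changes_dir_at"

definition F :: "nat set \<Rightarrow> nat list \<Rightarrow> nat list" where
  "F S q = Finite_Set.fold cmap q S"

definition cnt :: "nat \<Rightarrow> nat list \<Rightarrow> nat" where
  "cnt i q = (if ch q (i-2) then 1 else 0) + (if ch q (i-1) then 1 else 0)"

definition QQ :: "nat \<Rightarrow> nat set" where
  "QQ n = (\<Union>i\<in>Cn n. {i-2, i-1})"

lemma Cn_props: "i \<in> Cn n \<Longrightarrow> odd i \<and> 3 \<le> i \<and> i \<le> n - 1"
  by (auto simp: Cn_def split: if_splits)

lemma finite_Cn: "finite (Cn n)"
  by (rule finite_subset[of _ "{..n}"]) (auto dest: Cn_props)

lemma F_empty[simp]: "F {} q = q" by (simp add: F_def)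

lemma F_insert: "finite S \<Longrightarrow> i \<notin> S \<Longrightarrow> F (insert i S) q = cmap i (F S q)"
  by (simp add: F_def)

lemma F_insert': "finite S \<Longrightarrow> i \<notin> S \<Longrightarrow> F (insert i S) q = F S (cmap i q)"
  unfolding F_def using cm.fold_insert cm.fold_fun_left_comm by metis

lemma perm_F: "finite S \<Longrightarrow> q \<in> permutations_of_set A \<Longrightarrow> F S q \<in> permutations_of_set A"
  by (induction S rule: finite_induct) (auto simp: F_insert perm_cmap)

lemma cnt_cmap_other: assumes "i \<in> Cn n" "k \<in> Cn n" "k \<noteq> i"
  shows "cnt i (cmap k q) = cnt i q"
proof -
  have "odd i" "3 \<le> i" "odd k" "3 \<le> k" using assms Cn_props by auto
  then obtain a b where ab: "i = 2*a+1" "k = 2*b+1" by (metis oddE)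
  have h1: "(i - 2 + 2 < k \<or> k \<le> i - 2)" and h2: "(i - 1 + 2 < k \<or> k \<le> i - 1)"
    using assms(3) ab \<open>3 \<le> i\<close> by presburger+
  have "ch (cmap k q) (i-2) = ch q (i-2)" using ch_inv[OF h1] .
  moreover have "ch (cmap k q) (i-1) = ch q (i-1)" using ch_inv[OF h2] .
  ultimately show ?thesis unfolding cnt_def by simp
qed

lemma ch_cmap_rest: assumes "k \<in> Cn n" "j \<notin> QQ n"
  shows "ch (cmap k q) j = ch q j"
proof -
  have "3 \<le> k" using assms Cn_props by auto
  moreover have "j \<notin> {k - 2, k - 1}" using assms unfolding QQ_def by blast
  ultimately have "j + 2 < k \<or> k \<le> j" by auto
  then show ?thesis by (rule ch_inv)
qed

lemma cnt_F_other: "finite S \<Longrightarrow> S \<subseteq> Cn n \<Longrightarrow> i \<in> Cn n \<Longrightarrow> i \<notin> S \<Longrightarrow> cnt i (F S q) = cnt i q"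
proof (induction S rule: finite_induct)
  case (insert x S)
  then have "cnt i (cmap x (F S q)) = cnt i (F S q)" by (intro cnt_cmap_other[of i n x]) auto
  then show ?case using insert by (simp add: F_insert)
qed simp

lemma ch_F_rest: "finite S \<Longrightarrow> S \<subseteq> Cn n \<Longrightarrow> j \<notin> QQ n \<Longrightarrow> ch (F S q) j = ch q j"
proof (induction S rule: finite_induct)
  case (insert x S)
  then have "ch (cmap x (F S q)) j = ch (F S q) j" by (intro ch_cmap_rest[of x n]) auto
  then show ?case using insert by (simp add: F_insert)
qed simp

lemma cnt_F: assumes "S \<subseteq> Cn n" "i \<in> Cn n"
  shows "cnt i (F S p) = (if i \<in> S then cnt i (cmap i p) else cnt i p)"
proof -
  have fS: "finite S" using assms finite_Cn finite_subset by blast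
  show ?thesis
  proof (cases "i \<in> S")
    case True
    then have "S = insert i (S - {i})" by auto
    then have "F S p = F (S - {i}) (cmap i p)" using F_insert'[of "S - {i}" i p] fS by auto
    then show ?thesis using cnt_F_other[of "S - {i}" n i] fS assms True by auto
  next
    case False
    then show ?thesis using cnt_F_other fS assms by auto
  qed
qed

lemma cnt_flip: assumes "p \<in> permutations_of_set {1..n}" "i \<in> Cn n"
  shows "cnt i (cmap i p) = cnt i p + 1 \<or> cnt i p = cnt i (cmap i p) + 1"
proof -
  have "distinct p" "length p = n" using assms(1)
    by (auto simp: permutations_of_set_def dest: distinct_card)
  moreover have "3 \<le> i" "i \<le> n - 1" using Cn_props assms(2) by auto
  ultimately have "i < length p" "distinct p" "3 \<le> i" by auto
  from ch_flip[OF this(2,3,1)] show ?thesis unfolding cnt_def by auto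
qed



lemma orbit_eq: "orbit n p = (\<lambda>S. F S p) ` Pow (Cn n)"
proof
  let ?R = "{(x, cmap i x) | x i. i \<in> Cn n}"
  show "orbit n p \<subseteq> (\<lambda>S. F S p) ` Pow (Cn n)"
  proof
    fix q assume "q \<in> orbit n p"
    then have "(p, q) \<in> ?R\<^sup>*" by (simp add: orbit_def)
    then show "q \<in> (\<lambda>S. F S p) ` Pow (Cn n)"
    proof (induction rule: rtrancl_induct)
      case base
      show ?case by (rule image_eqI[of _ _ "{}"]) auto
    next
      case (step y z)
      then obtain i where i: "z = cmap i y" "i \<in> Cn n" by auto
      from step obtain S where S: "S \<subseteq> Cn n" "y = F S p" by auto
      have fS: "finite S" using S finite_Cn finite_subset by blast
      show ?case
      proof (cases "i \<in> S")
        case False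
        then have "z = F (insert i S) p" using i S fS by (simp add: F_insert)
        then show ?thesis using S i by auto
      next
        case True
        then have Si: "S = insert i (S - {i})" by auto
        have "y = cmap i (F (S - {i}) p)" using S(2) F_insert[of "S - {i}" i p] fS Si by simp
        then have "z = F (S - {i}) p" using i cmap_cmap by simp
        then show ?thesis using S by auto
      qed
    qed
  qed
  show "(\<lambda>S. F S p) ` Pow (Cn n) \<subseteq> orbit n p"
  proof
    fix q assume "q \<in> (\<lambda>S. F S p) ` Pow (Cn n)"
    then obtain S where S: "S \<subseteq> Cn n" "q = F S p" by auto
    have fS: "finite S" using S finite_Cn finite_subset by blast
    have "(p, F S p) \<in> ?R\<^sup>*" using fS S(1)
    proof (induction S rule: finite_induct)
      case empty then show ?case by simp
    next
      case (insert x S)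
      then have "(F S p, F (insert x S) p) \<in> ?R" by (auto simp: F_insert)
      then show ?case using insert by (meson insert_subset rtrancl_into_rtrancl)
    qed
    then show "q \<in> orbit n p" using S by (simp add: orbit_def)
  qed
qed

lemma F_inj: assumes "p \<in> permutations_of_set {1..n}"
  shows "inj_on (\<lambda>S. F S p) (Pow (Cn n))"
proof (rule inj_onI)
  fix S T assume S: "S \<in> Pow (Cn n)" and T: "T \<in> Pow (Cn n)" and e: "F S p = F T p"
  show "S = T"
  proof (rule ccontr)
    assume "S \<noteq> T"
    then obtain i where i: "(i \<in> S \<and> i \<notin> T) \<or> (i \<in> T \<and> i \<notin> S)" by blast
    then have iC: "i \<in> Cn n" using S T by auto
    have "cnt i (cmap i p) \<noteq> cnt i p" using cnt_flip[OF assms iC] by auto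
    then show False using cnt_F[of S n i p] cnt_F[of T n i p] S T iC e i by auto
  qed
qed

lemma Cn_disj: assumes "i \<in> Cn n" "k \<in> Cn n" "i \<noteq> k"
  shows "{i-2, i-1} \<inter> {k-2, k-1} = {}"
proof -
  have "odd i" "3 \<le> i" "odd k" "3 \<le> k" using assms Cn_props by auto
  then obtain a b where ab: "i = 2*a+1" "k = 2*b+1" by (metis oddE)
  have "i - 2 \<noteq> k - 2" "i - 2 \<noteq> k - 1" "i - 1 \<noteq> k - 2" "i - 1 \<noteq> k - 1"
    using ab assms(3) \<open>3 \<le> i\<close> \<open>3 \<le> k\<close> by presburger+
  then show ?thesis by auto
qed

lemma run_decomp: "run q = 1 + card {j. ch q j \<and> j \<notin> QQ n} + (\<Sum>i\<in>Cn n. cnt i q)"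
proof -
  define C where "C = {j. ch q j}"
  have fC: "finite C" unfolding C_def
    by (rule finite_subset[of _ "{..<length q}"]) (auto simp: changes_dir_at_def)
  have eq: "C = {j. ch q j \<and> j \<notin> QQ n} \<union> (\<Union>i\<in>Cn n. {i-2, i-1} \<inter> C)"
    unfolding C_def QQ_def by auto
  have d1: "{j. ch q j \<and> j \<notin> QQ n} \<inter> (\<Union>i\<in>Cn n. {i-2, i-1} \<inter> C) = {}"
    unfolding QQ_def by auto
  have cU: "card (\<Union>i\<in>Cn n. {i-2, i-1} \<inter> C) = (\<Sum>i\<in>Cn n. card ({i-2, i-1} \<inter> C))"
    by (rule card_UN_disjoint) (use finite_Cn Cn_disj in auto)
  have cc: "card ({i-2, i-1} \<inter> C) = cnt i q" if "i \<in> Cn n" for i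
  proof -
    have "i - 2 \<noteq> i - 1" using Cn_props[OF that] by auto
    then show ?thesis unfolding cnt_def C_def by (cases "ch q (i-2)"; cases "ch q (i-1)") auto
  qed
  have "card C = card {j. ch q j \<and> j \<notin> QQ n} + card (\<Union>i\<in>Cn n. {i-2, i-1} \<inter> C)"
    by (subst eq, rule card_Un_disjoint) (use fC eq d1 in \<open>auto intro: finite_subset\<close>)
  then show ?thesis unfolding run_def C_def[symmetric] cU using cc by simp
qed

lemma card_Cn: assumes "n \<ge> 4" shows "card (Cn n) = (n - 2) div 2"
proof -
  have "Cn n = (\<lambda>t. 2*t+1) ` {1..(n-2) div 2}"
  proof
    show "Cn n \<subseteq> (\<lambda>t. 2*t+1) ` {1..(n-2) div 2}"
    proof
      fix x assume x: "x \<in> Cn n"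
      then obtain t where t: "x = 2*t+1" by (metis Cn_props oddE)
      have "t \<in> {1..(n-2) div 2}" using x t unfolding Cn_def by (auto split: if_splits)
      then show "x \<in> (\<lambda>t. 2*t+1) ` {1..(n-2) div 2}" using t by auto
    qed
    show "(\<lambda>t. 2*t+1) ` {1..(n-2) div 2} \<subseteq> Cn n"
    proof
      fix x assume "x \<in> (\<lambda>t. 2*t+1) ` {1..(n-2) div 2}"
      then obtain t where t: "x = 2*t+1" "1 \<le> t" "t \<le> (n-2) div 2" by auto
      then show "x \<in> Cn n" unfolding Cn_def using assms by (auto split: if_splits) presburger+
    qed
  qed
  moreover have "inj_on (\<lambda>t. 2*t+1::nat) {1..(n-2) div 2}" by (auto simp: inj_on_def)
  ultimately show ?thesis by (simp add: card_image)
qed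



lemma poly_sum:
  fixes x y :: "nat \<Rightarrow> nat" and P :: "nat set"
  assumes fP: "finite P" and xy: "\<And>i. i \<in> P \<Longrightarrow> y i = x i + 1 \<or> x i = y i + 1"
  shows "(\<Sum>S\<in>Pow P. ([:0,1::int:])^(c + (\<Sum>i\<in>P. if i\<in>S then y i else x i)))
       = [:0,1:]^(c + (\<Sum>i\<in>P. min (x i) (y i))) * [:1,1:]^card P"
proof -
  define X where "X = [:0,1::int:]"
  have e1: "X^(c + (\<Sum>i\<in>P. if i\<in>S then y i else x i)) = X^c * ((\<Prod>i\<in>S. X^y i) * (\<Prod>i\<in>P-S. X^x i))"
    if "S \<in> Pow P" for S
  proof -
    have "X^(c + (\<Sum>i\<in>P. if i\<in>S then y i else x i)) = X^c * (\<Prod>i\<in>P. X^(if i\<in>S then y i else x i))"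
      by (simp add: power_add power_sum)
    also have "(\<Prod>i\<in>P. X^(if i\<in>S then y i else x i)) = (\<Prod>i\<in>P. if i\<in>S then X^y i else X^x i)"
      by (rule prod.cong) auto
    also have "\<dots> = (\<Prod>i\<in>P \<inter> {i. i \<in> S}. X^y i) * (\<Prod>i\<in>P \<inter> - {i. i \<in> S}. X^x i)"
      by (rule prod.If_cases[OF fP])
    also have "P \<inter> {i. i \<in> S} = S" using that by auto
    also have "P \<inter> - {i. i \<in> S} = P - S" by auto
    finally show ?thesis .
  qed
  have "(\<Sum>S\<in>Pow P. X^(c + (\<Sum>i\<in>P. if i\<in>S then y i else x i)))
      = (\<Sum>S\<in>Pow P. X^c * ((\<Prod>i\<in>S. X^y i) * (\<Prod>i\<in>P-S. X^x i)))"
    by (rule sum.cong) (auto simp: e1)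
  also have "\<dots> = X^c * (\<Prod>i\<in>P. X^y i + X^x i)"
    by (simp add: prod_add[OF fP] sum_distrib_left)
  also have "(\<Prod>i\<in>P. X^y i + X^x i) = (\<Prod>i\<in>P. X^(min (x i) (y i)) * [:1,1:])"
  proof (rule prod.cong)
    fix i assume "i \<in> P"
    have one: "[:1,1::int:] = 1 + X" by (simp add: X_def one_pCons)
    from xy[OF \<open>i \<in> P\<close>] show "X^y i + X^x i = X^(min (x i) (y i)) * [:1,1:]"
      by (auto simp: one algebra_simps)
  qed simp
  also have "\<dots> = X^(\<Sum>i\<in>P. min (x i) (y i)) * [:1,1:]^card P"
    by (simp only: prod.distrib prod_constant power_sum)
  finally show ?thesis unfolding X_def by (simp add: power_add mult.assoc)
qed

lemma monom_X: "monom (1::int) k = [:0,1:]^k"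
  by (simp add: monom_altdef)

theorem mainTheorem3:
  fixes n :: nat and p :: "nat list"
  assumes "n \<ge> 4"
    and "p \<in> permutations_of_set {1..n}"
  shows "card (orbit n p) = 2 ^ ((n - 2) div 2) \<and>
         (\<exists>a::nat. (\<Sum>q\<in>orbit n p. monom (1::int) (run q))
                     = monom 1 a * [:1, 1:] ^ ((n - 2) div 2))"
proof -
  let ?P = "Cn n"
  have inj: "inj_on (\<lambda>S. F S p) (Pow ?P)" by (rule F_inj[OF assms(2)])
  have c1: "card (orbit n p) = 2 ^ ((n - 2) div 2)"
    unfolding orbit_eq card_image[OF inj] card_Pow[OF finite_Cn] card_Cn[OF assms(1)] ..
  define x where "x i = cnt i p" for i
  define y where "y i = cnt i (cmap i p)" for i
  define r0 where "r0 = card {j. ch p j \<and> j \<notin> QQ n}"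
  have runF: "run (F S p) = (1 + r0) + (\<Sum>i\<in>?P. if i\<in>S then y i else x i)" if "S \<in> Pow ?P" for S
  proof -
    have fS: "finite S" using that finite_Cn finite_subset by blast
    have "{j. ch (F S p) j \<and> j \<notin> QQ n} = {j. ch p j \<and> j \<notin> QQ n}"
      using ch_F_rest[OF fS] that by auto
    moreover have "(\<Sum>i\<in>?P. cnt i (F S p)) = (\<Sum>i\<in>?P. if i\<in>S then y i else x i)"
      by (rule sum.cong) (use cnt_F that x_def y_def in auto)
    ultimately show ?thesis using run_decomp[of "F S p" n] r0_def by simp
  qed
  have "(\<Sum>q\<in>orbit n p. monom (1::int) (run q)) = (\<Sum>S\<in>Pow ?P. monom (1::int) (run (F S p)))"
    unfolding orbit_eq by (rule sum.reindex[OF inj, unfolded comp_def])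
  also have "\<dots> = (\<Sum>S\<in>Pow ?P. [:0,1::int:]^((1 + r0) + (\<Sum>i\<in>?P. if i\<in>S then y i else x i)))"
    by (rule sum.cong) (auto simp: monom_X runF)
  also have "\<dots> = [:0,1:]^((1 + r0) + (\<Sum>i\<in>?P. min (x i) (y i))) * [:1,1:]^card ?P"
    by (rule poly_sum[OF finite_Cn]) (use cnt_flip[OF assms(2)] x_def y_def in auto)
  also have "\<dots> = monom 1 ((1 + r0) + (\<Sum>i\<in>?P. min (x i) (y i))) * [:1, 1:] ^ ((n - 2) div 2)"
    by (simp add: monom_X card_Cn[OF assms(1)])
  finally show ?thesis using c1 by blast
qed

end
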